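(* For any terms $s,t$, $\mathbf{W}\models s\approx t$ if, and only if, $\mathbf{R}\models s\approx t$.
   Context: Let $\omega^+=\omega\cup\{\omega\}$ with its natural order. A time warp is a map $f\colon\omega^+\to\omega^+$ preserving arbitrary joins (equivalently, order-preserving with $f(0)=0$ and $f(\omega)=\bigvee\{f(n)\mid n\in\omega\}$). Let $W$ be the set of time warps, ordered pointwise; let $p\in W$ be the predecessor map $p(m)=\bigvee\{n\in\omega\mid n<m\}$; for $f,g\in W$ let $f\backslash g$ be the largest time warp $h$ with $f\circ h\le g$. The time warp algebra is $\mathbf{W}=\langle W,\wedge,\vee,\circ,{}^\star,\mathrm{id}\rangle$ with pointwise meet/join, composition, $f^\star:=f\backslash p$, and identity. A time warp $f$ is regular if there exist $m\in\omega$, $l\in\{0,1\}$ and $k\in\mathbb{Z}\cup\{\omega\}$ with $f(n)=ln+k$ for all $n\in\omega$ with $n\ge m$ (i.e. $f$ is eventually constant or eventually of the form $n\mapsto n+k$). $\mathbf{R}$ denotes the subalgebra of $\mathbf{W}$ consisting of regular time warps. Terms are built from variables using $\wedge,\vee,\cdot,{}',1$, interpreted as $\wedge,\vee,\circ,{}^\star,\mathrm{id}$; an algebra satisfies $s\approx t$ if $s,t$ agree under every assignment into it. *)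

theory Defs
  imports Main "HOL-Library.Extended_Nat"
begin

text \<open>The chain omega+ = omega \<union> {omega} is modelled by enat (\<infinity> = omega).\<close>

definition time_warp :: "(enat \<Rightarrow> enat) \<Rightarrow> bool" where
  "time_warp f \<longleftrightarrow> (\<forall>A. f (Sup A) = Sup (f ` A))"

definition pred_tw :: "enat \<Rightarrow> enat" where
  "pred_tw m = Sup {enat n | n. enat n < m}"

definition tw_res :: "(enat \<Rightarrow> enat) \<Rightarrow> (enat \<Rightarrow> enat) \<Rightarrow> (enat \<Rightarrow> enat)" where
  "tw_res f g = (GREATEST h. time_warp h \<and> f \<circ> h \<le> g)"

definition tw_star :: "(enat \<Rightarrow> enat) \<Rightarrow> (enat \<Rightarrow> enat)" where
  "tw_star f = tw_res f pred_tw"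

text \<open>Regular: eventually f(n) = l*n + k with l \<in> {0,1}, k \<in> \<int> \<union> {omega}.
  Case k = omega or l = 0: eventually constant (value in omega+);
  case l = 1, k \<in> \<int>: eventually n \<mapsto> n + k.\<close>
definition regular_tw :: "(enat \<Rightarrow> enat) \<Rightarrow> bool" where
  "regular_tw f \<longleftrightarrow> time_warp f \<and>
     (\<exists>m::nat. (\<exists>c::enat. \<forall>n\<ge>m. f (enat n) = c)
             \<or> (\<exists>k::int. \<forall>n\<ge>m. 0 \<le> int n + k \<and> f (enat n) = enat (nat (int n + k))))"

datatype trm = Var nat | Meet trm trm | Join trm trm | Comp trm trm | Star trm | One

primrec eval_tw :: "(nat \<Rightarrow> (enat \<Rightarrow> enat)) \<Rightarrow> trm \<Rightarrow> (enat \<Rightarrow> enat)" where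
  "eval_tw \<sigma> (Var i) = \<sigma> i"
| "eval_tw \<sigma> (Meet s t) = (\<lambda>x. min (eval_tw \<sigma> s x) (eval_tw \<sigma> t x))"
| "eval_tw \<sigma> (Join s t) = (\<lambda>x. max (eval_tw \<sigma> s x) (eval_tw \<sigma> t x))"
| "eval_tw \<sigma> (Comp s t) = eval_tw \<sigma> s \<circ> eval_tw \<sigma> t"
| "eval_tw \<sigma> (Star s) = tw_star (eval_tw \<sigma> s)"
| "eval_tw \<sigma> One = id"

definition W_sat :: "trm \<Rightarrow> trm \<Rightarrow> bool" where
  "W_sat s t \<longleftrightarrow> (\<forall>\<sigma>. (\<forall>i. time_warp (\<sigma> i)) \<longrightarrow> eval_tw \<sigma> s = eval_tw \<sigma> t)"

definition R_sat :: "trm \<Rightarrow> trm \<Rightarrow> bool" where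
  "R_sat s t \<longleftrightarrow> (\<forall>\<sigma>. (\<forall>i. regular_tw (\<sigma> i)) \<longrightarrow> eval_tw \<sigma> s = eval_tw \<sigma> t)"

end

theory Submission
  imports Defs
begin

lemma Sup_range_enat: "Sup (range enat) = \<infinity>"
proof -
  have "\<not> finite (range enat)"
    by (metis finite_imageD infinite_UNIV_nat inj_onI enat.inject)
  then show ?thesis unfolding Sup_enat_def by auto
qed

lemma tw_zero: "time_warp f \<Longrightarrow> f 0 = 0"
  unfolding time_warp_def by (metis Sup_empty image_empty bot_enat_def)

lemma tw_mono: "time_warp f \<Longrightarrow> mono f"
proof (rule monoI)
  fix a b :: enat assume tw: "time_warp f" and ab: "a \<le> b"
  have "f (Sup {a,b}) = Sup (f ` {a,b})" using tw unfolding time_warp_def by blast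
  moreover have "Sup {a,b} = b" using ab by (simp add: sup_enat_def)
  ultimately have "f b = max (f a) (f b)" by (simp add: sup_enat_def)
  then show "f a \<le> f b" by (metis max.cobounded1)
qed

lemma tw_inf: "time_warp f \<Longrightarrow> f \<infinity> = (SUP n. f (enat n))"
proof -
  assume "time_warp f"
  then have "f (Sup (range enat)) = Sup (f ` range enat)" unfolding time_warp_def by blast
  then show ?thesis by (simp add: Sup_range_enat image_image)
qed

lemma all_enat_le_inf: "(\<And>y. enat y \<le> x) \<Longrightarrow> x = \<infinity>"
  by (cases x) (metis Suc_n_not_le_n enat_ord_simps(1), simp)

lemma tw_intro:
  assumes m: "mono f" and z: "f 0 = 0" and i: "f \<infinity> = (SUP n. f (enat n))"
  shows "time_warp f"
  unfolding time_warp_def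
proof
  fix A :: "enat set"
  show "f (Sup A) = Sup (f ` A)"
  proof (cases "A = {}")
    case True then show ?thesis using z by (simp add: bot_enat_def)
  next
    case ne: False
    show ?thesis
    proof (cases "finite A")
      case True
      then have sA: "Sup A = Max A" "Max A \<in> A" using ne by (auto simp: Sup_enat_def)
      show ?thesis
      proof (rule antisym)
        show "f (Sup A) \<le> Sup (f ` A)" using sA by (metis Sup_upper imageI)
        show "Sup (f ` A) \<le> f (Sup A)" using m by (meson Sup_upper SUP_least monoD)
      qed
    next
      case False
      then have sA: "Sup A = \<infinity>" using ne by (simp add: Sup_enat_def)
      show ?thesis
      proof (rule antisym)
        show "Sup (f ` A) \<le> f (Sup A)" using m by (meson Sup_upper SUP_least monoD)
        have "f (enat n) \<le> Sup (f ` A)" for n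
        proof -
          obtain a where a: "a \<in> A" "\<not> a \<le> enat n" using False finite_enat_bounded by blast
          then have "f (enat n) \<le> f a" using m by (simp add: monoD)
          also have "\<dots> \<le> Sup (f ` A)" using a by (simp add: Sup_upper)
          finally show ?thesis .
        qed
        then show "f (Sup A) \<le> Sup (f ` A)" using sA i by (simp add: SUP_least)
      qed
    qed
  qed
qed


lemma tw_comp: "time_warp f \<Longrightarrow> time_warp g \<Longrightarrow> time_warp (f \<circ> g)"
  unfolding time_warp_def by (simp add: image_comp)

lemma tw_id: "time_warp id"
  unfolding time_warp_def by simp

lemma tw_max: assumes "time_warp f" "time_warp g" shows "time_warp (\<lambda>x. max (f x) (g x))"
proof (rule tw_intro)
  show "mono (\<lambda>x. max (f x) (g x))" using tw_mono[OF assms(1)] tw_mono[OF assms(2)]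
    unfolding mono_def by (metis max.mono)
  show "max (f 0) (g 0) = 0" using assms by (simp add: tw_zero)
  have "(SUP n. max (f (enat n)) (g (enat n))) = sup (SUP n. f (enat n)) (SUP n. g (enat n))"
    using SUP_sup_distrib[of UNIV "\<lambda>n. f (enat n)" "\<lambda>n. g (enat n)", symmetric] by (simp add: sup_enat_def)
  then show "max (f \<infinity>) (g \<infinity>) = (SUP n. max (f (enat n)) (g (enat n)))"
    using assms by (simp add: tw_inf sup_enat_def)
qed

lemma tw_min: assumes "time_warp f" "time_warp g" shows "time_warp (\<lambda>x. min (f x) (g x))"
proof (rule tw_intro)
  have mf: "mono f" and mg: "mono g" using assms tw_mono by auto
  then show "mono (\<lambda>x. min (f x) (g x))" unfolding mono_def by (metis min.mono)
  show "min (f 0) (g 0) = 0" using assms by (simp add: tw_zero)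
  show "min (f \<infinity>) (g \<infinity>) = (SUP n. min (f (enat n)) (g (enat n)))"
  proof (rule antisym)
    show "(SUP n. min (f (enat n)) (g (enat n))) \<le> min (f \<infinity>) (g \<infinity>)"
      using mf mg by (auto intro!: SUP_least simp: monoD min.coboundedI1 min.coboundedI2)
    show "min (f \<infinity>) (g \<infinity>) \<le> (SUP n. min (f (enat n)) (g (enat n)))"
    proof (rule ccontr)
      let ?a = "(SUP n. min (f (enat n)) (g (enat n)))"
      assume "\<not> ?thesis"
      then have "?a < min (f \<infinity>) (g \<infinity>)" by (simp only: not_le)
      then have "?a < (SUP n. f (enat n))" "?a < (SUP n. g (enat n))"
        using assms by (auto simp: tw_inf)
      then obtain n1 n2 where "?a < f (enat n1)" "?a < g (enat n2)" by (auto simp: less_SUP_iff)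
      note n12 = this
      have "f (enat n1) \<le> f (enat (max n1 n2))" "g (enat n2) \<le> g (enat (max n1 n2))"
        using mf mg by (simp_all add: monoD)
      then have "?a < f (enat (max n1 n2))" "?a < g (enat (max n1 n2))" using n12
        by (meson order_less_le_trans)+
      then have "?a < min (f (enat (max n1 n2))) (g (enat (max n1 n2)))" by simp
      moreover have "min (f (enat (max n1 n2))) (g (enat (max n1 n2))) \<le> ?a" by (rule SUP_upper) simp
      ultimately show False by (meson less_le_not_le)
    qed
  qed
qed

definition trunc :: "nat \<Rightarrow> (enat \<Rightarrow> enat) \<Rightarrow> enat \<Rightarrow> enat" where
  "trunc M f x = (if x \<le> enat M then f x else if f \<infinity> = \<infinity> then f (enat M) + x else f \<infinity>)"

lemma trunc_tw: assumes tw: "time_warp f" shows "time_warp (trunc M f)"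
proof (rule tw_intro)
  have mf: "mono f" using tw tw_mono by auto
  show "mono (trunc M f)"
  proof (rule monoI)
    fix x y :: enat assume xy: "x \<le> y"
    show "trunc M f x \<le> trunc M f y"
    proof (cases "y \<le> enat M")
      case True then show ?thesis using xy mf by (auto simp: trunc_def monoD)
    next
      case False
      have a: "f x \<le> f \<infinity>" using mf by (simp add: monoD)
      have b: "x \<le> enat M \<Longrightarrow> f x \<le> f (enat M)" using mf by (simp add: monoD)
      show ?thesis using False xy a b
        by (auto simp: trunc_def add_mono intro: order.trans[OF _ le_iff_add[THEN iffD2]])
    qed
  qed
  show "trunc M f 0 = 0" using tw by (simp add: trunc_def tw_zero)
  show "trunc M f \<infinity> = (SUP n. trunc M f (enat n))"
  proof (cases "f \<infinity> = \<infinity>")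
    case True
    have "enat y \<le> (SUP n. trunc M f (enat n))" for y
    proof -
      have "enat y \<le> f (enat M) + enat (y + Suc M)"
        by (rule add_increasing) auto
      then have "enat y \<le> trunc M f (enat (y + Suc M))"
        by (simp add: trunc_def True)
      also have "\<dots> \<le> (SUP n. trunc M f (enat n))" by (rule SUP_upper) simp
      finally show ?thesis .
    qed
    then show ?thesis using all_enat_le_inf True by (simp add: trunc_def) metis
  next
    case False
    have "trunc M f \<infinity> = f \<infinity>" using False by (simp add: trunc_def)
    moreover have "(SUP n. trunc M f (enat n)) = f \<infinity>"
    proof (rule antisym)
      show "(SUP n. trunc M f (enat n)) \<le> f \<infinity>"
      proof (rule SUP_least)
        fix n show "trunc M f (enat n) \<le> f \<infinity>" using False mf by (simp add: trunc_def monoD)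
      qed
      have "trunc M f (enat (Suc M)) = f \<infinity>" using False by (cases "f \<infinity>") (auto simp: trunc_def)
      then show "f \<infinity> \<le> (SUP n. trunc M f (enat n))" by (metis SUP_upper UNIV_I)
    qed
    ultimately show ?thesis by simp
  qed
qed

lemma trunc_reg: assumes tw: "time_warp f" shows "regular_tw (trunc M f)"
  unfolding regular_tw_def
proof (intro conjI)
  show "time_warp (trunc M f)" using tw by (rule trunc_tw)
  show "\<exists>m. (\<exists>c. \<forall>n\<ge>m. trunc M f (enat n) = c) \<or>
      (\<exists>k::int. \<forall>n\<ge>m. 0 \<le> int n + k \<and> trunc M f (enat n) = enat (nat (int n + k)))"
  proof (cases "f \<infinity> = \<infinity>")
    case False
    then show ?thesis by (intro exI[of _ "Suc M"] disjI1 exI[of _ "f \<infinity>"]) (auto simp: trunc_def)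
  next
    case True
    show ?thesis
    proof (cases "f (enat M)")
      case (enat a)
      show ?thesis
        by (intro exI[of _ "Suc M"] disjI2 exI[of _ "int a"]) (auto simp: trunc_def True enat)
    next
      case infinity
      then show ?thesis by (intro exI[of _ "Suc M"] disjI1 exI[of _ "\<infinity>"]) (auto simp: trunc_def True)
    qed
  qed
qed

lemma trunc_agree: "x \<le> enat M \<Longrightarrow> trunc M f x = f x"
  by (simp add: trunc_def)

lemma trunc_inf: "trunc M f \<infinity> = f \<infinity>"
  by (cases "f (enat M)") (auto simp: trunc_def)

lemma trunc_fin: assumes "\<forall>n. f (enat n) < \<infinity>" shows "trunc M f (enat n) < \<infinity>"
proof -
  have a: "f (enat M) < \<infinity>" using assms by blast
  show ?thesis using assms a by (cases "f (enat M)") (auto simp: trunc_def)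
qed



lemma pred_enat: "pred_tw (enat n) = enat (n - 1)"
proof (cases "n = 0")
  case True
  then show ?thesis by (simp add: pred_tw_def bot_enat_def zero_enat_def)
next
  case False
  show ?thesis unfolding pred_tw_def
  proof (rule antisym)
    show "Sup {enat k |k. enat k < enat n} \<le> enat (n - 1)"
      by (rule Sup_least) auto
    show "enat (n - 1) \<le> Sup {enat k |k. enat k < enat n}"
      by (rule Sup_upper) (use False in auto)
  qed
qed

lemma pred_inf: "pred_tw \<infinity> = \<infinity>"
proof -
  have "{enat n |n. enat n < \<infinity>} = range enat" by auto
  then show ?thesis by (simp add: pred_tw_def Sup_range_enat)
qed

definition stS :: "(enat \<Rightarrow> enat) \<Rightarrow> enat \<Rightarrow> enat" where
  "stS f c = Sup {y. f y \<le> c}"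

definition gst :: "(enat \<Rightarrow> enat) \<Rightarrow> nat \<Rightarrow> enat" where
  "gst f n = (if n = 0 then 0 else stS f (enat (n - 1)))"

definition star0 :: "(enat \<Rightarrow> enat) \<Rightarrow> enat \<Rightarrow> enat" where
  "star0 f x = (case x of enat n \<Rightarrow> gst f n | \<infinity> \<Rightarrow> (SUP n. gst f n))"

lemma stS_mono: "c \<le> d \<Longrightarrow> stS f c \<le> stS f d"
  unfolding stS_def by (rule Sup_subset_mono) auto

lemma gst_mono: "mono (gst f)"
  by (rule monoI) (auto simp: gst_def stS_mono)

lemma star0_tw: "time_warp (star0 f)"
proof (rule tw_intro)
  show "mono (star0 f)"
  proof (rule monoI)
    fix x y :: enat assume "x \<le> y"
    then show "star0 f x \<le> star0 f y"
      by (cases x; cases y) (auto simp: star0_def monoD[OF gst_mono] intro: SUP_upper)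
  qed
  show "star0 f 0 = 0" by (simp add: star0_def gst_def zero_enat_def)
  show "star0 f \<infinity> = (SUP n. star0 f (enat n))" by (simp add: star0_def)
qed

lemma star_eq: assumes tw: "time_warp f" shows "tw_star f = star0 f"
  unfolding tw_star_def tw_res_def
proof (rule Greatest_equality)
  show "time_warp (star0 f) \<and> f \<circ> star0 f \<le> pred_tw"
  proof
    show "time_warp (star0 f)" by (rule star0_tw)
    show "f \<circ> star0 f \<le> pred_tw"
    proof (rule le_funI)
      fix x show "(f \<circ> star0 f) x \<le> pred_tw x"
      proof (cases x)
        case (enat n)
        show ?thesis
        proof (cases "n = 0")
          case True
          have "(f \<circ> star0 f) x = f 0" using enat True by (simp add: star0_def gst_def)
          then show ?thesis using tw_zero[OF tw] by simp
        next
          case False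
          have "f (Sup {y. f y \<le> enat (n - 1)}) = Sup (f ` {y. f y \<le> enat (n - 1)})"
            using tw unfolding time_warp_def by blast
          also have "\<dots> \<le> enat (n - 1)" by (rule SUP_least) auto
          finally show ?thesis using enat False by (simp add: star0_def gst_def stS_def pred_enat)
        qed
      next
        case infinity then show ?thesis by (simp add: pred_inf)
      qed
    qed
  qed
  fix h assume h: "time_warp h \<and> f \<circ> h \<le> pred_tw"
  then have twh: "time_warp h" and fh: "\<And>x. f (h x) \<le> pred_tw x" by (auto simp: le_fun_def)
  have fin: "h (enat n) \<le> gst f n" for n
  proof (cases "n = 0")
    case True then show ?thesis using twh by (simp add: tw_zero zero_enat_def[symmetric])
  next
    case False
    have "f (h (enat n)) \<le> enat (n - 1)" using fh[of "enat n"] by (simp add: pred_enat)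
    then show ?thesis using False by (simp add: gst_def stS_def Sup_upper)
  qed
  show "h \<le> star0 f"
  proof (rule le_funI)
    fix x show "h x \<le> star0 f x"
    proof (cases x)
      case (enat n) then show ?thesis using fin by (simp add: star0_def)
    next
      case infinity
      have "(SUP n. h (enat n)) \<le> (SUP n. gst f n)" using fin by (meson SUP_mono UNIV_I)
      then show ?thesis using twh infinity by (simp add: star0_def tw_inf)
    qed
  qed
qed


lemma star0_enat[simp]: "star0 f (enat n) = gst f n"
  by (simp add: star0_def)

lemma stS_cases:
  assumes tw: "time_warp f"
  shows "(stS f c = \<infinity> \<and> f \<infinity> \<le> c) \<or>
         (\<exists>y0. stS f c = enat y0 \<and> f (enat y0) \<le> c \<and> c < f (enat (Suc y0)))"
proof -
  have "f (Sup {y. f y \<le> c}) = Sup (f ` {y. f y \<le> c})"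
    using tw unfolding time_warp_def by blast
  also have "\<dots> \<le> c" by (rule SUP_least) auto
  finally have fS: "f (stS f c) \<le> c" by (simp add: stS_def)
  show ?thesis
  proof (cases "stS f c")
    case infinity then show ?thesis using fS by simp
  next
    case (enat y0)
    have "c < f (enat (Suc y0))"
    proof (rule ccontr)
      assume "\<not> c < f (enat (Suc y0))"
      then have "enat (Suc y0) \<le> stS f c" unfolding stS_def by (intro Sup_upper) (simp add: not_less)
      then show False using enat by simp
    qed
    then show ?thesis using fS enat by auto
  qed
qed

lemma stS_inf: "g \<infinity> \<le> c \<Longrightarrow> stS g c = \<infinity>"
proof -
  assume "g \<infinity> \<le> c"
  then have "\<infinity> \<le> stS g c" unfolding stS_def by (intro Sup_upper) simp
  then show ?thesis by (simp add: top_enat_def[symmetric] top_unique)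
qed

lemma stS_fin:
  assumes m: "mono g" and a: "g (enat y0) \<le> c" and b: "c < g (enat (Suc y0))"
  shows "stS g c = enat y0"
  unfolding stS_def
proof (rule antisym)
  show "Sup {y. g y \<le> c} \<le> enat y0"
  proof (rule Sup_least)
    fix y assume "y \<in> {y. g y \<le> c}"
    then have gy: "g y \<le> c" by simp
    show "y \<le> enat y0"
    proof (rule ccontr)
      assume "\<not> y \<le> enat y0"
      then have "enat (Suc y0) \<le> y" by (simp add: Suc_ile_eq not_le)
      then have "g (enat (Suc y0)) \<le> g y" using m by (simp add: monoD)
      then show False using gy b by simp
    qed
  qed
  show "enat y0 \<le> Sup {y. g y \<le> c}" using a by (intro Sup_upper) simp
qed

lemma star0_inf_fin:
  assumes tw: "time_warp f" and fin: "\<forall>n. f (enat n) < \<infinity>"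
  shows "star0 f \<infinity> = \<infinity>"
proof -
  have "enat y \<le> star0 f \<infinity>" for y
  proof -
    obtain a where a: "f (enat y) = enat a" using fin by (metis less_infinityE)
    have "enat y \<le> gst f (Suc a)" using a by (simp add: gst_def stS_def Sup_upper)
    also have "\<dots> \<le> star0 f \<infinity>" by (simp add: star0_def SUP_upper)
    finally show ?thesis .
  qed
  then show ?thesis by (rule all_enat_le_inf)
qed

lemma star0_inf_jump:
  assumes tw: "time_warp f" and j1: "f (enat (Suc j)) = \<infinity>" and j: "f (enat j) < \<infinity>"
  shows "star0 f \<infinity> = enat j"
proof -
  have m: "mono f" using tw tw_mono by auto
  have le: "gst f n \<le> enat j" for n
  proof (cases "n = 0")
    case True then show ?thesis by (simp add: gst_def)
  next
    case False
    show ?thesis unfolding gst_def stS_def using False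
    proof (simp, intro Sup_least)
      fix y assume gy: "y \<in> {y. f y \<le> enat (n - Suc 0)}"
      show "y \<le> enat j"
      proof (rule ccontr)
        assume "\<not> y \<le> enat j"
        then have "enat (Suc j) \<le> y" by (simp add: Suc_ile_eq not_le)
        then have "f (enat (Suc j)) \<le> f y" using m by (simp add: monoD)
        then show False using gy j1 by simp
      qed
    qed
  qed
  obtain a where a: "f (enat j) = enat a" using j by (metis less_infinityE)
  have "gst f (Suc a) = enat j" using stS_fin[OF m, of j "enat a"] a j1 by (simp add: gst_def)
  then have "enat j \<le> star0 f \<infinity>" unfolding star0_def by (metis SUP_upper UNIV_I enat.simps(5))
  moreover have "star0 f \<infinity> \<le> enat j" unfolding star0_def using le by (simp add: SUP_least)
  ultimately show ?thesis by simp
qed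

lemma star0_fin_imp:
  assumes tw: "time_warp f" and fin: "\<forall>n. star0 f (enat n) < \<infinity>"
  shows "f \<infinity> = \<infinity>"
proof (rule ccontr)
  assume "f \<infinity> \<noteq> \<infinity>"
  then obtain c where c: "f \<infinity> = enat c" by auto
  have "star0 f (enat (Suc c)) = \<infinity>" using stS_inf[of f "enat c"] c by (simp add: gst_def)
  then show False using fin by (metis less_irrefl)
qed

lemma star0_fin:
  assumes tw: "time_warp f" and inf: "f \<infinity> = \<infinity>"
  shows "star0 f (enat n) < \<infinity>"
proof (cases "n = 0")
  case True then show ?thesis by (simp add: gst_def)
next
  case False
  from stS_cases[OF tw, of "enat (n - 1)"] inf
  show ?thesis using False by (auto simp: gst_def)
qed

lemma tw_eval: "(\<forall>i. time_warp (\<sigma> i)) \<Longrightarrow> time_warp (eval_tw \<sigma> u)"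
  by (induction u) (auto intro: tw_max tw_min tw_comp tw_id simp: star_eq star0_tw)


definition conv :: "(nat \<Rightarrow> enat \<Rightarrow> enat) \<Rightarrow> (enat \<Rightarrow> enat) \<Rightarrow> bool" where
  "conv F f \<longleftrightarrow> (\<forall>x. eventually (\<lambda>M. F M x = f x) sequentially) \<and>
     ((\<forall>n. f (enat n) < \<infinity>) \<longrightarrow> eventually (\<lambda>M. \<forall>n. F M (enat n) < \<infinity>) sequentially)"

lemma conv_trunc: "conv (\<lambda>M. trunc M f) f"
  unfolding conv_def
proof (intro conjI allI impI)
  fix x show "eventually (\<lambda>M. trunc M f x = f x) sequentially"
  proof (cases x)
    case (enat n)
    then show ?thesis unfolding eventually_sequentially
      by (intro exI[of _ n]) (auto simp: trunc_agree)
  next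
    case infinity then show ?thesis by (simp add: trunc_inf)
  qed
next
  assume a: "\<forall>n. f (enat n) < \<infinity>"
  show "eventually (\<lambda>M. \<forall>n. trunc M f (enat n) < \<infinity>) sequentially"
    by (rule always_eventually) (use a trunc_fin in blast)
qed

lemma conv_id: "conv (\<lambda>M. id) id"
  unfolding conv_def by simp

lemma conv_max:
  assumes "conv F f" "conv G g"
  shows "conv (\<lambda>M x. max (F M x) (G M x)) (\<lambda>x. max (f x) (g x))"
  unfolding conv_def
proof (intro conjI allI impI)
  fix x
  have "eventually (\<lambda>M. F M x = f x \<and> G M x = g x) sequentially"
    using assms unfolding conv_def by (simp add: eventually_conj)
  then show "eventually (\<lambda>M. max (F M x) (G M x) = max (f x) (g x)) sequentially"
    by (rule eventually_mono) simp
next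
  assume "\<forall>n. max (f (enat n)) (g (enat n)) < \<infinity>"
  then have "\<forall>n. f (enat n) < \<infinity>" "\<forall>n. g (enat n) < \<infinity>" by (metis max_less_iff_conj)+
  then have "eventually (\<lambda>M. (\<forall>n. F M (enat n) < \<infinity>) \<and> (\<forall>n. G M (enat n) < \<infinity>)) sequentially"
    using assms unfolding conv_def by (simp add: eventually_conj)
  then show "eventually (\<lambda>M. \<forall>n. max (F M (enat n)) (G M (enat n)) < \<infinity>) sequentially"
    by (rule eventually_mono) (metis max_less_iff_conj)
qed

lemma conv_min:
  assumes "conv F f" "conv G g" "mono f" "mono g"
  shows "conv (\<lambda>M x. min (F M x) (G M x)) (\<lambda>x. min (f x) (g x))"
  unfolding conv_def
proof (intro conjI allI impI)
  fix x
  have "eventually (\<lambda>M. F M x = f x \<and> G M x = g x) sequentially"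
    using assms unfolding conv_def by (simp add: eventually_conj)
  then show "eventually (\<lambda>M. min (F M x) (G M x) = min (f x) (g x)) sequentially"
    by (rule eventually_mono) simp
next
  assume mf: "\<forall>n. min (f (enat n)) (g (enat n)) < \<infinity>"
  have "(\<forall>n. f (enat n) < \<infinity>) \<or> (\<forall>n. g (enat n) < \<infinity>)"
  proof (rule ccontr)
    assume "\<not> ?thesis"
    then obtain a b where a: "f (enat a) = \<infinity>" and b: "g (enat b) = \<infinity>" by auto
    have "f (enat a) \<le> f (enat (max a b))" "g (enat b) \<le> g (enat (max a b))"
      using assms(3,4) by (simp_all add: monoD)
    then have "f (enat (max a b)) = \<infinity>" "g (enat (max a b)) = \<infinity>" using a b by auto
    then show False using mf by (metis min.idem less_irrefl)
  qed
  then show "eventually (\<lambda>M. \<forall>n. min (F M (enat n)) (G M (enat n)) < \<infinity>) sequentially"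
  proof
    assume "\<forall>n. f (enat n) < \<infinity>"
    then have "eventually (\<lambda>M. \<forall>n. F M (enat n) < \<infinity>) sequentially" using assms(1) by (simp add: conv_def)
    then show ?thesis by (rule eventually_mono) (blast intro: min.strict_coboundedI1)
  next
    assume "\<forall>n. g (enat n) < \<infinity>"
    then have "eventually (\<lambda>M. \<forall>n. G M (enat n) < \<infinity>) sequentially" using assms(2) by (simp add: conv_def)
    then show ?thesis by (rule eventually_mono) (blast intro: min.strict_coboundedI2)
  qed
qed

lemma Sup_fin_attained: "Sup A = enat c \<Longrightarrow> A \<noteq> {} \<Longrightarrow> enat c \<in> A"
  by (metis Max_in Sup_enat_def enat.distinct(2))

lemma conv_comp:
  assumes cF: "conv F f" and cG: "conv G g" and twF: "\<And>M. time_warp (F M)" and twG: "\<And>M. time_warp (G M)"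
    and tf: "time_warp f" and tg: "time_warp g"
  shows "conv (\<lambda>M. F M \<circ> G M) (f \<circ> g)"
  unfolding conv_def
proof (intro conjI allI impI)
  fix x
  have "eventually (\<lambda>M. G M x = g x \<and> F M (g x) = f (g x)) sequentially"
    using cF cG unfolding conv_def by (simp add: eventually_conj)
  then show "eventually (\<lambda>M. (F M \<circ> G M) x = (f \<circ> g) x) sequentially"
    by (rule eventually_mono) simp
next
  assume fin: "\<forall>n. (f \<circ> g) (enat n) < \<infinity>"
  have mf: "mono f" and mg: "mono g" using tf tg tw_mono by auto
  show "eventually (\<lambda>M. \<forall>n. (F M \<circ> G M) (enat n) < \<infinity>) sequentially"
  proof (cases "f (g \<infinity>) < \<infinity>")
    case True
    have "eventually (\<lambda>M. G M \<infinity> = g \<infinity> \<and> F M (g \<infinity>) = f (g \<infinity>)) sequentially"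
      using cF cG unfolding conv_def by (simp add: eventually_conj)
    then show ?thesis
    proof (rule eventually_mono)
      fix M assume M: "G M \<infinity> = g \<infinity> \<and> F M (g \<infinity>) = f (g \<infinity>)"
      show "\<forall>n. (F M \<circ> G M) (enat n) < \<infinity>"
      proof
        fix n
        have "G M (enat n) \<le> G M \<infinity>" using tw_mono[OF twG] by (simp add: monoD)
        then have "F M (G M (enat n)) \<le> F M (G M \<infinity>)" using tw_mono[OF twF] by (simp add: monoD)
        then show "(F M \<circ> G M) (enat n) < \<infinity>" using M True
          by (simp only: comp_apply)
      qed
    qed
  next
    case False
    have ginf: "g \<infinity> = \<infinity>"
    proof (rule ccontr)
      assume "g \<infinity> \<noteq> \<infinity>"
      then obtain c where c: "g \<infinity> = enat c" by auto
      then have "Sup (range (\<lambda>n. g (enat n))) = enat c" using tw_inf[OF tg] by simp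
      then have "enat c \<in> range (\<lambda>n. g (enat n))" by (rule Sup_fin_attained) simp
      then obtain n1 where "g (enat n1) = enat c" by auto
      then show False using fin False c by (metis comp_apply)
    qed
    then have finf: "f \<infinity> = \<infinity>" using False by simp
    have gfin: "\<forall>n. g (enat n) < \<infinity>"
    proof
      fix n show "g (enat n) < \<infinity>"
        using fin finf by (metis comp_apply less_infinityE enat_ord_simps(4))
    qed
    have ffin: "\<forall>y. f (enat y) < \<infinity>"
    proof
      fix y
      have "\<exists>n. enat y \<le> g (enat n)"
      proof (rule ccontr)
        assume "\<not> ?thesis"
        then have "\<forall>n. g (enat n) \<le> enat y" by (auto simp: not_le less_imp_le)
        then have "(SUP n. g (enat n)) \<le> enat y" by (simp add: SUP_least)
        then show False using ginf tw_inf[OF tg] by simp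
      qed
      then obtain n where "enat y \<le> g (enat n)" by auto
      then have "f (enat y) \<le> f (g (enat n))" using mf by (simp add: monoD)
      then show "f (enat y) < \<infinity>" using fin by (metis comp_apply order_le_less_trans)
    qed
    have "eventually (\<lambda>M. (\<forall>n. F M (enat n) < \<infinity>) \<and> (\<forall>n. G M (enat n) < \<infinity>)) sequentially"
      using cF cG ffin gfin unfolding conv_def by (simp add: eventually_conj)
    then show ?thesis
      by (rule eventually_mono) (metis comp_apply less_infinityE)
  qed
qed


lemma conv_star:
  assumes cF: "conv F f" and twF: "\<And>M. time_warp (F M)" and tf: "time_warp f"
  shows "conv (\<lambda>M. star0 (F M)) (star0 f)"
  unfolding conv_def
proof (intro conjI allI impI)
  have pw: "\<And>x. eventually (\<lambda>M. F M x = f x) sequentially" using cF by (simp add: conv_def)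
  fix x show "eventually (\<lambda>M. star0 (F M) x = star0 f x) sequentially"
  proof (cases x)
    case (enat n)
    show ?thesis
    proof (cases "n = 0")
      case True then show ?thesis using enat by (simp add: gst_def)
    next
      case False
      from stS_cases[OF tf, of "enat (n - 1)"] show ?thesis
      proof
        assume a: "stS f (enat (n - 1)) = \<infinity> \<and> f \<infinity> \<le> enat (n - 1)"
        show ?thesis using pw[of \<infinity>]
        proof (rule eventually_mono)
          fix M assume "F M \<infinity> = f \<infinity>"
          then have "stS (F M) (enat (n - 1)) = \<infinity>" using a by (intro stS_inf) simp
          then show "star0 (F M) x = star0 f x" using a enat False by (simp add: gst_def)
        qed
      next
        assume "\<exists>y0. stS f (enat (n - 1)) = enat y0 \<and> f (enat y0) \<le> enat (n - 1) \<and>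
                 enat (n - 1) < f (enat (Suc y0))"
        then obtain y0 where y: "stS f (enat (n - 1)) = enat y0" "f (enat y0) \<le> enat (n - 1)"
          "enat (n - 1) < f (enat (Suc y0))" by blast
        have "eventually (\<lambda>M. F M (enat y0) = f (enat y0) \<and> F M (enat (Suc y0)) = f (enat (Suc y0))) sequentially"
          using pw by (simp add: eventually_conj)
        then show ?thesis
        proof (rule eventually_mono)
          fix M assume "F M (enat y0) = f (enat y0) \<and> F M (enat (Suc y0)) = f (enat (Suc y0))"
          then have "stS (F M) (enat (n - 1)) = enat y0"
            using y tw_mono[OF twF] by (intro stS_fin) auto
          then show "star0 (F M) x = star0 f x" using y enat False by (simp add: gst_def)
        qed
      qed
    qed
  next
    case infinity
    show ?thesis
    proof (cases "\<forall>n. f (enat n) < \<infinity>")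
      case True
      then have "eventually (\<lambda>M. \<forall>n. F M (enat n) < \<infinity>) sequentially" using cF by (simp add: conv_def)
      then show ?thesis
        by (rule eventually_mono) (simp add: infinity star0_inf_fin[OF twF] star0_inf_fin[OF tf True])
    next
      case False
      then have ex: "\<exists>k. f (enat k) = \<infinity>" by (metis less_infinityE not_less top_enat_def top_greatest enat_ord_simps(4))
      define k where "k = (LEAST k. f (enat k) = \<infinity>)"
      have k: "f (enat k) = \<infinity>" unfolding k_def using ex by (rule LeastI_ex)
      have "k \<noteq> 0" using k tw_zero[OF tf] by (metis zero_enat_def infinity_ne_i0)
      then obtain j where j: "k = Suc j" by (metis not0_implies_Suc)
      have "f (enat j) \<noteq> \<infinity>" using not_less_Least[of j "\<lambda>k. f (enat k) = \<infinity>"] j k_def by simp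
      then have fj: "f (enat j) < \<infinity>" by (metis less_top top_enat_def)
      have "eventually (\<lambda>M. F M (enat j) = f (enat j) \<and> F M (enat (Suc j)) = f (enat (Suc j))) sequentially"
        using pw by (simp add: eventually_conj)
      then show ?thesis
      proof (rule eventually_mono)
        fix M assume M: "F M (enat j) = f (enat j) \<and> F M (enat (Suc j)) = f (enat (Suc j))"
        have "star0 (F M) \<infinity> = enat j" using M k j fj by (intro star0_inf_jump[OF twF]) auto
        moreover have "star0 f \<infinity> = enat j" using k j fj by (intro star0_inf_jump[OF tf]) auto
        ultimately show "star0 (F M) x = star0 f x" using infinity by simp
      qed
    qed
  qed
next
  assume "\<forall>n. star0 f (enat n) < \<infinity>"
  then have "f \<infinity> = \<infinity>" by (rule star0_fin_imp[OF tf])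
  moreover have "eventually (\<lambda>M. F M \<infinity> = f \<infinity>) sequentially" using cF by (simp add: conv_def)
  ultimately show "eventually (\<lambda>M. \<forall>n. star0 (F M) (enat n) < \<infinity>) sequentially"
    by (elim eventually_mono) (use star0_fin[OF twF] in metis)
qed

lemma conv_eval:
  assumes tw: "\<forall>i. time_warp (\<sigma> i)"
  shows "conv (\<lambda>M. eval_tw (\<lambda>i. trunc M (\<sigma> i)) u) (eval_tw \<sigma> u)"
proof -
  have twM: "\<And>M. \<forall>i. time_warp (trunc M (\<sigma> i))" using tw trunc_tw by blast
  show ?thesis
  proof (induction u)
    case (Var i) show ?case unfolding eval_tw.simps by (rule conv_trunc)
  next
    case (Meet s t) show ?case unfolding eval_tw.simps
      by (rule conv_min[OF Meet.IH tw_mono[OF tw_eval[OF tw]] tw_mono[OF tw_eval[OF tw]]])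
  next
    case (Join s t) show ?case unfolding eval_tw.simps by (rule conv_max[OF Join.IH])
  next
    case (Comp s t)
    show ?case unfolding eval_tw.simps
      by (rule conv_comp[OF Comp.IH tw_eval[OF twM] tw_eval[OF twM] tw_eval[OF tw] tw_eval[OF tw]])
  next
    case (Star s)
    have "conv (\<lambda>M. star0 (eval_tw (\<lambda>i. trunc M (\<sigma> i)) s)) (star0 (eval_tw \<sigma> s))"
      by (rule conv_star[OF Star.IH tw_eval[OF twM] tw_eval[OF tw]])
    then show ?case unfolding eval_tw.simps star_eq[OF tw_eval[OF twM]] star_eq[OF tw_eval[OF tw]] .
  next
    case One show ?case unfolding eval_tw.simps by (rule conv_id)
  qed
qed

theorem theorem3p11:
  shows "W_sat s t \<longleftrightarrow> R_sat s t"
proof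
  assume "W_sat s t" then show "R_sat s t"
    unfolding W_sat_def R_sat_def regular_tw_def by blast
next
  assume R: "R_sat s t"
  show "W_sat s t" unfolding W_sat_def
  proof (intro allI impI)
    fix \<sigma> :: "nat \<Rightarrow> enat \<Rightarrow> enat" assume tw: "\<forall>i. time_warp (\<sigma> i)"
    have eq: "eval_tw (\<lambda>i. trunc M (\<sigma> i)) s = eval_tw (\<lambda>i. trunc M (\<sigma> i)) t" for M
    proof -
      have "\<forall>i. regular_tw (trunc M (\<sigma> i))" using tw trunc_reg by blast
      then show ?thesis using R[unfolded R_sat_def, rule_format, of "\<lambda>i. trunc M (\<sigma> i)"] by simp
    qed
    show "eval_tw \<sigma> s = eval_tw \<sigma> t"
    proof
      fix x
      have "eventually (\<lambda>M. eval_tw (\<lambda>i. trunc M (\<sigma> i)) s x = eval_tw \<sigma> s x \<and>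
                            eval_tw (\<lambda>i. trunc M (\<sigma> i)) t x = eval_tw \<sigma> t x) sequentially"
        using conv_eval[OF tw, of s] conv_eval[OF tw, of t] by (simp add: conv_def eventually_conj)
      then obtain M where "eval_tw (\<lambda>i. trunc M (\<sigma> i)) s x = eval_tw \<sigma> s x \<and>
                            eval_tw (\<lambda>i. trunc M (\<sigma> i)) t x = eval_tw \<sigma> t x"
        using eventually_happens'[OF sequentially_bot] by blast
      then show "eval_tw \<sigma> s x = eval_tw \<sigma> t x" using eq[of M] by (metis (no_types))
    qed
  qed
qed

end
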